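(* Let $\mathcal A_V$ be the algebra of Laurent polynomials in $a_V,b_V,c_V,d_V$ with the log-canonical Poisson bracket $\{a_V,b_V\}=a_Vb_V$, $\{a_V,c_V\}=0$, $\{a_V,d_V\}=-\tfrac12 a_Vd_V$, $\{b_V,c_V\}=0$, $\{b_V,d_V\}=-\tfrac12 b_Vd_V$, $\{c_V,d_V\}=-\tfrac12 c_Vd_V$. Let $\mathcal A_{IV}$ be the algebra of Laurent polynomials in $a,b,c,d,e,f,h$ with the log-canonical bracket $\{a,b\}=0,\ \{a,c\}=-\tfrac12 ac,\ \{a,d\}=-\tfrac12 ad,\ \{a,e\}=0,\ \{a,f\}=\tfrac12 af,\ \{a,h\}=\tfrac12 ah,$ $\{b,c\}=\tfrac14 bc,\ \{b,d\}=0,\ \{b,e\}=\tfrac14 be,\ \{b,f\}=\tfrac14 bf,\ \{b,h\}=-\tfrac14 bh,$ $\{c,d\}=-\tfrac14 cd,\ \{c,e\}=\tfrac14 ce,\ \{c,f\}=0,\ \{c,h\}=\tfrac14 ch,$ $\{d,e\}=-\tfrac14 de,\ \{d,f\}=\tfrac14 df,\ \{d,h\}=\tfrac14 dh,$ $\{e,f\}=-\tfrac14 ef,\ \{e,h\}=0,\ \{f,h\}=\tfrac14 fh$. Then the assignment $a_V\mapsto ab^2$, $b_V\mapsto bf$, $c_V\mapsto bc$, $d_V\mapsto bd$ defines an injective Poisson homomorphism $\mathcal A_V\to\mathcal A_{IV}$, so that $\mathcal A_V$ is realised as the Poisson subalgebra of $\mathcal A_{IV}$ of functions of $ab^2,bf,bc,bd$;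 moreover $h$ Poisson commutes with this subalgebra.
   Context: A log-canonical bracket is extended from the generators to all Laurent polynomials by bilinearity, antisymmetry and the Leibniz rule. *)

theory Defs
  imports "HOL-Library.Poly_Mapping"
begin

text \<open>Laurent polynomials in finitely many variables of type 'v with coefficients in 'k:
  finitely supported maps from exponent vectors (finitely supported 'v => int) to 'k,
  with convolution product (ring structure from Poly_Mapping).\<close>
type_synonym ('v, 'k) laurent = "('v \<Rightarrow>\<^sub>0 int) \<Rightarrow>\<^sub>0 'k"

definition gen :: "'v \<Rightarrow> ('v, 'k::{zero,one}) laurent" where
  "gen x = Poly_Mapping.single (Poly_Mapping.single x 1) 1"

definition const :: "'k::zero \<Rightarrow> ('v, 'k) laurent" where
  "const c = Poly_Mapping.single 0 c"

text \<open>Log-canonical bracket with matrix omega: on monomials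
  {x^alpha, x^beta} = (sum_{i,j} alpha_i beta_j omega_ij) x^(alpha+beta),
  extended by bilinearity (this is the unique extension satisfying bilinearity,
  antisymmetry and the Leibniz rule from the generator values {x_i,x_j} = omega_ij x_i x_j).\<close>
definition lc_bracket ::
  "('v::finite \<Rightarrow> 'v \<Rightarrow> 'k::comm_ring_1) \<Rightarrow> ('v, 'k) laurent \<Rightarrow> ('v, 'k) laurent \<Rightarrow> ('v, 'k) laurent" where
  "lc_bracket w P Q =
     (\<Sum>al\<in>Poly_Mapping.keys P. \<Sum>be\<in>Poly_Mapping.keys Q.
        Poly_Mapping.single (al + be)
          (Poly_Mapping.lookup P al * Poly_Mapping.lookup Q be *
           (\<Sum>p\<in>(UNIV::'v set). \<Sum>q\<in>(UNIV::'v set). of_int (Poly_Mapping.lookup al p) * of_int (Poly_Mapping.lookup be q) * w p q)))"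

definition alg_hom :: "(('v, 'k::comm_ring_1) laurent \<Rightarrow> ('w, 'k) laurent) \<Rightarrow> bool" where
  "alg_hom \<phi> \<longleftrightarrow> \<phi> 1 = 1 \<and> (\<forall>P Q. \<phi> (P + Q) = \<phi> P + \<phi> Q) \<and> (\<forall>P Q. \<phi> (P * Q) = \<phi> P * \<phi> Q)
     \<and> (\<forall>c P. \<phi> (const c * P) = const c * \<phi> P)"

datatype varV = aV | bV | cV | dV

lemma UNIV_varV: "(UNIV :: varV set) = {aV, bV, cV, dV}"
  by (auto intro: varV.exhaust)

instance varV :: finite
  by standard (simp add: UNIV_varV)

datatype varIV = a | b | c | d | e | f | h

lemma UNIV_varIV: "(UNIV :: varIV set) = {a, b, c, d, e, f, h}"
  by (auto intro: varIV.exhaust)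

instance varIV :: finite
  by standard (simp add: UNIV_varIV)

fun idxV :: "varV \<Rightarrow> nat" where
  "idxV aV = 0" | "idxV bV = 1" | "idxV cV = 2" | "idxV dV = 3"

fun upV :: "varV \<Rightarrow> varV \<Rightarrow> 'k::field" where
  "upV aV bV = 1"
| "upV aV cV = 0"
| "upV aV dV = - 1/2"
| "upV bV cV = 0"
| "upV bV dV = - 1/2"
| "upV cV dV = - 1/2"
| "upV _ _ = 0"

definition omegaV :: "varV \<Rightarrow> varV \<Rightarrow> 'k::field" where
  "omegaV x y = (if idxV x < idxV y then upV x y else if idxV y < idxV x then - upV y x else 0)"

fun idxIV :: "varIV \<Rightarrow> nat" where
  "idxIV a = 0" | "idxIV b = 1" | "idxIV c = 2" | "idxIV d = 3"
| "idxIV e = 4" | "idxIV f = 5" | "idxIV h = 6"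

fun upIV :: "varIV \<Rightarrow> varIV \<Rightarrow> 'k::field" where
  "upIV a b = 0" | "upIV a c = - 1/2" | "upIV a d = - 1/2" | "upIV a e = 0"
| "upIV a f = 1/2" | "upIV a h = 1/2"
| "upIV b c = 1/4" | "upIV b d = 0" | "upIV b e = 1/4" | "upIV b f = 1/4" | "upIV b h = - 1/4"
| "upIV c d = - 1/4" | "upIV c e = 1/4" | "upIV c f = 0" | "upIV c h = 1/4"
| "upIV d e = - 1/4" | "upIV d f = 1/4" | "upIV d h = 1/4"
| "upIV e f = - 1/4" | "upIV e h = 0"
| "upIV f h = 1/4"
| "upIV _ _ = 0"

definition omegaIV :: "varIV \<Rightarrow> varIV \<Rightarrow> 'k::field" where
  "omegaIV x y = (if idxIV x < idxIV y then upIV x y else if idxIV y < idxIV x then - upIV y x else 0)"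

fun imgV :: "varV \<Rightarrow> (varIV, 'k::comm_ring_1) laurent" where
  "imgV aV = gen a * gen b ^ 2"
| "imgV bV = gen b * gen f"
| "imgV cV = gen b * gen c"
| "imgV dV = gen b * gen d"

end

theory Submission
  imports Defs
begin

definition Mexp :: "(varV \<Rightarrow>\<^sub>0 int) \<Rightarrow> (varIV \<Rightarrow>\<^sub>0 int)" where
  "Mexp al = Poly_Mapping.single a (Poly_Mapping.lookup al aV)
    + Poly_Mapping.single b (2 * Poly_Mapping.lookup al aV + Poly_Mapping.lookup al bV + Poly_Mapping.lookup al cV + Poly_Mapping.lookup al dV)
    + Poly_Mapping.single c (Poly_Mapping.lookup al cV) + Poly_Mapping.single d (Poly_Mapping.lookup al dV)
    + Poly_Mapping.single f (Poly_Mapping.lookup al bV)"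

lemma Mexp_lookup [simp]:
  "Poly_Mapping.lookup (Mexp al) a = Poly_Mapping.lookup al aV"
  "Poly_Mapping.lookup (Mexp al) b = 2 * Poly_Mapping.lookup al aV + Poly_Mapping.lookup al bV + Poly_Mapping.lookup al cV + Poly_Mapping.lookup al dV"
  "Poly_Mapping.lookup (Mexp al) c = Poly_Mapping.lookup al cV"
  "Poly_Mapping.lookup (Mexp al) d = Poly_Mapping.lookup al dV"
  "Poly_Mapping.lookup (Mexp al) e = 0"
  "Poly_Mapping.lookup (Mexp al) f = Poly_Mapping.lookup al bV"
  "Poly_Mapping.lookup (Mexp al) h = 0"
  by (simp_all add: Mexp_def lookup_add lookup_single)

lemma Mexp_add: "Mexp (x + y) = Mexp x + Mexp y"
  by (rule poly_mapping_eqI) (case_tac k; simp add: lookup_add)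

lemma Mexp_0 [simp]: "Mexp 0 = 0"
  by (rule poly_mapping_eqI) (case_tac k; simp)

lemma Mexp_inj: "inj Mexp"
proof (rule injI)
  fix x y assume "Mexp x = Mexp y"
  then have "\<And>v. Poly_Mapping.lookup (Mexp x) v = Poly_Mapping.lookup (Mexp y) v" by simp
  from this[of a] this[of c] this[of d] this[of f] show "x = y"
    by (intro poly_mapping_eqI, case_tac k) auto
qed

definition phi0 :: "(varV, 'k::comm_ring_1) laurent \<Rightarrow> (varIV, 'k) laurent" where
  "phi0 P = (\<Sum>al\<in>Poly_Mapping.keys P. Poly_Mapping.single (Mexp al) (Poly_Mapping.lookup P al))"

lemma phi0_superset:
  assumes "finite S" "Poly_Mapping.keys P \<subseteq> S"
  shows "phi0 P = (\<Sum>al\<in>S. Poly_Mapping.single (Mexp al) (Poly_Mapping.lookup P al))"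
  unfolding phi0_def
  by (rule sum.mono_neutral_left) (use assms in \<open>auto simp: in_keys_iff\<close>)

lemma phi0_add: "phi0 (P + Q) = phi0 P + phi0 Q"
proof -
  let ?S = "Poly_Mapping.keys P \<union> Poly_Mapping.keys Q"
  have "phi0 (P + Q) = (\<Sum>al\<in>?S. Poly_Mapping.single (Mexp al) (Poly_Mapping.lookup (P+Q) al))"
    by (rule phi0_superset) (auto dest: keys_add[THEN subsetD])
  also have "\<dots> = (\<Sum>al\<in>?S. Poly_Mapping.single (Mexp al) (Poly_Mapping.lookup P al))
     + (\<Sum>al\<in>?S. Poly_Mapping.single (Mexp al) (Poly_Mapping.lookup Q al))"
    by (simp add: lookup_add single_add sum.distrib)
  also have "\<dots> = phi0 P + phi0 Q"
    by (simp add: phi0_superset[symmetric])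
  finally show ?thesis .
qed

lemma phi0_zero [simp]: "phi0 0 = 0"
  by (simp add: phi0_def)

lemma phi0_single [simp]: "phi0 (Poly_Mapping.single al x) = Poly_Mapping.single (Mexp al) x"
  by (simp add: phi0_def)

lemma phi0_sum: "phi0 (sum F A) = (\<Sum>x\<in>A. phi0 (F x))"
  by (induction A rule: infinite_finite_induct) (auto simp: phi0_add)

lemma expansion: "P = (\<Sum>al\<in>Poly_Mapping.keys P. Poly_Mapping.single al (Poly_Mapping.lookup P al))"
  by (rule poly_mapping_eqI) (auto simp: lookup_sum lookup_single when_def in_keys_iff)

lemma phi0_mult: "phi0 (P * Q) = phi0 P * phi0 Q"
proof -
  have "P * Q = (\<Sum>al\<in>Poly_Mapping.keys P. \<Sum>be\<in>Poly_Mapping.keys Q. Poly_Mapping.single (al + be) (Poly_Mapping.lookup P al * Poly_Mapping.lookup Q be))"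
    by (subst expansion[of P], subst expansion[of Q]) (simp add: sum_product mult_single)
  then have "phi0 (P * Q) = (\<Sum>al\<in>Poly_Mapping.keys P. \<Sum>be\<in>Poly_Mapping.keys Q. Poly_Mapping.single (Mexp al + Mexp be) (Poly_Mapping.lookup P al * Poly_Mapping.lookup Q be))"
    by (simp add: phi0_sum Mexp_add)
  also have "\<dots> = phi0 P * phi0 Q"
    by (simp add: phi0_def sum_product mult_single)
  finally show ?thesis .
qed

lemma phi0_one: "phi0 1 = 1"
  by (metis Mexp_0 phi0_single single_one)

lemma phi0_const: "phi0 (const x) = const x"
  by (simp add: const_def)

lemma phi0_alg_hom: "alg_hom phi0"
  by (simp add: alg_hom_def phi0_one phi0_add phi0_mult phi0_const)

lemma Mexp_gen: "Mexp (Poly_Mapping.single aV 1) = Poly_Mapping.single a 1 + Poly_Mapping.single b 1 + Poly_Mapping.single b 1"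
  "Mexp (Poly_Mapping.single bV 1) = Poly_Mapping.single b 1 + Poly_Mapping.single f 1"
  "Mexp (Poly_Mapping.single cV 1) = Poly_Mapping.single b 1 + Poly_Mapping.single c 1"
  "Mexp (Poly_Mapping.single dV 1) = Poly_Mapping.single b 1 + Poly_Mapping.single d 1"
  by (rule poly_mapping_eqI; case_tac k; simp add: lookup_add lookup_single)+

lemma phi0_gen: "phi0 (gen x) = imgV x"
  by (cases x) (simp_all add: gen_def Mexp_gen power2_eq_square mult_single add.assoc)


lemma lookup_phi0_Mexp: "Poly_Mapping.lookup (phi0 P) (Mexp al) = Poly_Mapping.lookup P al"
proof -
  have "Poly_Mapping.lookup (phi0 P) (Mexp al) =
     (\<Sum>be\<in>Poly_Mapping.keys P. (Poly_Mapping.lookup P be when be = al))"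
    unfolding phi0_def lookup_sum lookup_single
    using Mexp_inj[THEN injD] by (intro sum.cong) (auto simp: when_def)
  also have "\<dots> = Poly_Mapping.lookup P al"
    by (auto simp: when_def in_keys_iff)
  finally show ?thesis .
qed

lemma phi0_inj: "inj phi0"
proof (rule injI)
  fix P Q :: "(varV, 'k::comm_ring_1) laurent"
  assume "phi0 P = phi0 Q"
  then show "P = Q"
    by (metis lookup_phi0_Mexp poly_mapping_eqI)
qed

lemma keys_phi0: "Poly_Mapping.keys (phi0 P) \<subseteq> Mexp ` Poly_Mapping.keys P"
  unfolding phi0_def by (rule order_trans[OF keys_sum]) (auto split: if_splits)

definition Bf :: "('v::finite \<Rightarrow> 'v \<Rightarrow> 'k::comm_ring_1) \<Rightarrow> ('v \<Rightarrow>\<^sub>0 int) \<Rightarrow> ('v \<Rightarrow>\<^sub>0 int) \<Rightarrow> 'k" where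
  "Bf w al be = (\<Sum>p\<in>(UNIV::'v set). \<Sum>q\<in>(UNIV::'v set). of_int (Poly_Mapping.lookup al p) * of_int (Poly_Mapping.lookup be q) * w p q)"

lemma lcb_superset:
  assumes "finite S" "Poly_Mapping.keys P \<subseteq> S" "finite T" "Poly_Mapping.keys Q \<subseteq> T"
  shows "lc_bracket w P Q = (\<Sum>al\<in>S. \<Sum>be\<in>T. Poly_Mapping.single (al + be)
           (Poly_Mapping.lookup P al * Poly_Mapping.lookup Q be * Bf w al be))" (is "_ = ?R")
proof -
  have "lc_bracket w P Q = (\<Sum>al\<in>Poly_Mapping.keys P. \<Sum>be\<in>T. Poly_Mapping.single (al + be)
           (Poly_Mapping.lookup P al * Poly_Mapping.lookup Q be * Bf w al be))"
    unfolding lc_bracket_def Bf_def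
    by (intro sum.cong refl sum.mono_neutral_left) (use assms in \<open>auto simp: in_keys_iff\<close>)
  also have "\<dots> = ?R"
    by (intro sum.mono_neutral_left) (use assms in \<open>auto simp: in_keys_iff\<close>)
  finally show ?thesis .
qed

lemma Bf_compat: "Bf omegaIV (Mexp al) (Mexp be) = (Bf omegaV al be :: 'k::field_char_0)"
  by (simp add: Bf_def UNIV_varIV UNIV_varV omegaIV_def omegaV_def algebra_simps)

lemma Bf_h: "Bf omegaIV (Poly_Mapping.single h 1) (Mexp be) = (0 :: 'k::field_char_0)"
  by (simp add: Bf_def UNIV_varIV omegaIV_def lookup_single algebra_simps)


lemma phi0_bracket:
  "phi0 (lc_bracket omegaV P Q) = lc_bracket omegaIV (phi0 P) (phi0 (Q :: (varV, 'k::field_char_0) laurent))"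
proof -
  have "phi0 (lc_bracket omegaV P Q) = (\<Sum>al\<in>Poly_Mapping.keys P. \<Sum>be\<in>Poly_Mapping.keys Q.
      Poly_Mapping.single (Mexp al + Mexp be)
        (Poly_Mapping.lookup P al * Poly_Mapping.lookup Q be * Bf omegaV al be))"
    by (simp add: lcb_superset[OF finite_keys subset_refl finite_keys subset_refl] phi0_sum Mexp_add)
  also have "\<dots> = (\<Sum>al\<in>Poly_Mapping.keys P. \<Sum>be\<in>Poly_Mapping.keys Q.
      Poly_Mapping.single (Mexp al + Mexp be)
        (Poly_Mapping.lookup (phi0 P) (Mexp al) * Poly_Mapping.lookup (phi0 Q) (Mexp be) * Bf omegaIV (Mexp al) (Mexp be)))"
    by (simp add: lookup_phi0_Mexp Bf_compat)
  also have "\<dots> = (\<Sum>al\<in>Mexp ` Poly_Mapping.keys P. \<Sum>be\<in>Mexp ` Poly_Mapping.keys Q.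
      Poly_Mapping.single (al + be)
        (Poly_Mapping.lookup (phi0 P) al * Poly_Mapping.lookup (phi0 Q) be * Bf omegaIV al be))"
    using Mexp_inj by (simp add: sum.reindex inj_on_def)
  also have "\<dots> = lc_bracket omegaIV (phi0 P) (phi0 Q)"
    by (rule lcb_superset[symmetric]) (auto simp: keys_phi0)
  finally show ?thesis .
qed

lemma phi0_h:
  "lc_bracket omegaIV (gen h) (phi0 (Q :: (varV, 'k::field_char_0) laurent)) = 0"
proof -
  have "lc_bracket omegaIV (gen h) (phi0 Q) = (\<Sum>al\<in>{Poly_Mapping.single h 1}. \<Sum>be\<in>Mexp ` Poly_Mapping.keys Q.
      Poly_Mapping.single (al + be)
        (Poly_Mapping.lookup (gen h) al * Poly_Mapping.lookup (phi0 Q) be * Bf omegaIV al be))"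
    by (rule lcb_superset) (auto simp: keys_phi0 gen_def)
  also have "\<dots> = 0"
    by (auto simp: Bf_h intro!: sum.neutral)
  finally show ?thesis .
qed

lemma alg_hom_zero: "alg_hom \<phi> \<Longrightarrow> \<phi> 0 = 0"
  unfolding alg_hom_def by (metis add_cancel_right_right add_0)

lemma alg_hom_sum: "alg_hom \<phi> \<Longrightarrow> \<phi> (sum F A) = (\<Sum>x\<in>A. \<phi> (F x))"
  by (induction A rule: infinite_finite_induct) (auto simp: alg_hom_zero, simp add: alg_hom_def)

lemma mono_add: "Poly_Mapping.single (x + y) (1::'k::comm_ring_1) = Poly_Mapping.single x 1 * Poly_Mapping.single y 1"
  by (simp add: mult_single)

lemma phi_mono:
  fixes \<phi> :: "(varV, 'k::comm_ring_1) laurent \<Rightarrow> (varIV, 'k) laurent"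
  assumes hom: "alg_hom \<phi>" and g: "\<forall>x. \<phi> (gen x) = imgV x"
  shows "\<phi> (Poly_Mapping.single al 1) = Poly_Mapping.single (Mexp al) 1"
proof -
  let ?H = "\<lambda>al. \<phi> (Poly_Mapping.single al 1) = Poly_Mapping.single (Mexp al) 1"
  have mul: "\<phi> (P * Q) = \<phi> P * \<phi> Q" for P Q using hom by (simp add: alg_hom_def)
  have Hadd: "?H (x + y)" if "?H x" "?H y" for x y
    using that by (simp add: mono_add mul Mexp_add)
  have H0: "?H 0" using hom by (simp add: alg_hom_def)
  have H1: "?H (Poly_Mapping.single p 1)" for p
  proof -
    have "imgV p = (Poly_Mapping.single (Mexp (Poly_Mapping.single p 1)) 1 :: (varIV,'k) laurent)"
      by (cases p) (simp_all add: gen_def Mexp_gen power2_eq_square mult_single add.assoc)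
    then show ?thesis using g by (simp add: gen_def)
  qed
  have Hm1: "?H (Poly_Mapping.single p (-1))" for p
  proof -
    let ?X = "Poly_Mapping.single (Poly_Mapping.single p (-1::int)) (1::'k)"
    let ?Y = "Poly_Mapping.single (Mexp (Poly_Mapping.single p 1)) (1::'k)"
    let ?Z = "Poly_Mapping.single (Mexp (Poly_Mapping.single p (-1))) (1::'k)"
    have s0: "Poly_Mapping.single p (-1) + Poly_Mapping.single p 1 = (0 :: varV \<Rightarrow>\<^sub>0 int)"
      by (simp flip: single_add)
    have "?X * Poly_Mapping.single (Poly_Mapping.single p (1::int)) 1 = 1"
      by (simp add: mult_single s0)
    then have 1: "\<phi> ?X * ?Y = 1"
      using mul H1[of p] hom by (metis alg_hom_def)
    have 2: "?Z * ?Y = 1"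
      by (simp add: mult_single flip: Mexp_add) (simp add: s0)
    have "\<phi> ?X = \<phi> ?X * (?Z * ?Y)" by (simp add: 2)
    also have "\<dots> = ?Z * (\<phi> ?X * ?Y)" by (simp add: ac_simps)
    also have "\<dots> = ?Z" by (simp add: 1)
    finally show ?thesis .
  qed
  have Hs: "?H (Poly_Mapping.single p n)" for p n
  proof (induction n rule: int_induct[where k=0])
    case base then show ?case using H0 by simp
  next
    case (step1 i)
    have "Poly_Mapping.single p (i + 1) = Poly_Mapping.single p i + Poly_Mapping.single p 1"
      by (simp add: single_add)
    then show ?case using Hadd[OF step1(2) H1] by simp
  next
    case (step2 i)
    have "Poly_Mapping.single p (i - 1) = Poly_Mapping.single p i + Poly_Mapping.single p (-1)"
      by (simp flip: single_add)
    then show ?case using Hadd[OF step2(2) Hm1] by simp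
  qed
  have Hsum: "?H (\<Sum>p\<in>A. Poly_Mapping.single p (Poly_Mapping.lookup al p))" if "finite A" for A
    using that by (induction A rule: finite_induct) (use H0 in simp, simp add: Hadd Hs)
  have "al = (\<Sum>p\<in>UNIV. Poly_Mapping.single p (Poly_Mapping.lookup al p))"
    by (rule poly_mapping_eqI) (simp add: lookup_sum lookup_single when_def)
  then show ?thesis using Hsum[of UNIV] by simp
qed

lemma phi_unique:
  fixes \<phi> :: "(varV, 'k::comm_ring_1) laurent \<Rightarrow> (varIV, 'k) laurent"
  assumes hom: "alg_hom \<phi>" and g: "\<forall>x. \<phi> (gen x) = imgV x"
  shows "\<phi> = phi0"
proof
  fix P
  have sg: "\<phi> (Poly_Mapping.single al x) = Poly_Mapping.single (Mexp al) x" for al x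
  proof -
    have "Poly_Mapping.single al x = const x * Poly_Mapping.single al 1"
      by (simp add: const_def mult_single)
    moreover have "\<phi> (const x * Poly_Mapping.single al 1) = const x * \<phi> (Poly_Mapping.single al 1)"
      using hom unfolding alg_hom_def by blast
    ultimately show ?thesis using phi_mono[OF hom g, of al]
      by (simp add: const_def mult_single)
  qed
  have "\<phi> P = \<phi> (\<Sum>al\<in>Poly_Mapping.keys P. Poly_Mapping.single al (Poly_Mapping.lookup P al))"
    by (subst expansion) simp
  also have "\<dots> = phi0 P"
    by (simp add: alg_hom_sum[OF hom] sg phi0_def)
  finally show "\<phi> P = phi0 P" .
qed

theorem mainTheorem4:
  shows "(\<exists>\<phi> :: (varV, 'k::field_char_0) laurent \<Rightarrow> (varIV, 'k) laurent.
            alg_hom \<phi> \<and> (\<forall>x. \<phi> (gen x) = imgV x))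
       \<and> (\<forall>\<phi> :: (varV, 'k) laurent \<Rightarrow> (varIV, 'k) laurent.
            alg_hom \<phi> \<and> (\<forall>x. \<phi> (gen x) = imgV x) \<longrightarrow>
              inj \<phi>
            \<and> (\<forall>P Q. \<phi> (lc_bracket omegaV P Q) = lc_bracket omegaIV (\<phi> P) (\<phi> Q))
            \<and> (\<forall>P \<in> range \<phi>. lc_bracket omegaIV (gen h) P = 0))"
  using phi0_alg_hom phi0_gen phi_unique phi0_inj phi0_bracket phi0_h by blast

end
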